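(* Let $b>2$ and $1<n<b$ be integers, and let $p$ be an $(n,b)$-palintiple. Then $p$ is shifted-symmetric if and only if $\gcd(b-n,n^2-1)\ge n+1$.
   Context: Let $b>2$ be an integer base and write $(d_k,d_{k-1},\ldots,d_0)_b=\sum_{j=0}^k d_j b^j$ with $0\le d_j<b$. A natural number $p=(d_k,\ldots,d_0)_b$ with $d_k\neq 0$ and $d_0\neq 0$ that is not a base-$b$ palindrome is an $(n,b)$-palintiple if $(d_k,\ldots,d_0)_b=n\,(d_0,d_1,\ldots,d_k)_b$ for an integer $n$ with $1<n<b$. Its carries $c_0,\ldots,c_{k+1}$ are the carries arising in the base-$b$ multiplication of $(d_0,\ldots,d_k)_b$ by $n$: $c_0=0$ and $n d_{k-j}+c_j=d_j+b\,c_{j+1}$ for $0\le j\le k$ (so $c_{k+1}=0$). The palintiple is shifted-symmetric if $c_j=c_{k-j+1}$ for all $0\le j\le k$. *)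

theory Defs
  imports Main
begin

definition digval :: "nat \<Rightarrow> (nat \<Rightarrow> nat) \<Rightarrow> nat \<Rightarrow> nat" where
  "digval b d k = (\<Sum>j\<le>k. d j * b ^ j)"

definition is_palindrome :: "(nat \<Rightarrow> nat) \<Rightarrow> nat \<Rightarrow> bool" where
  "is_palindrome d k \<longleftrightarrow> (\<forall>j\<le>k. d j = d (k - j))"

definition palintiple :: "nat \<Rightarrow> nat \<Rightarrow> (nat \<Rightarrow> nat) \<Rightarrow> nat \<Rightarrow> bool" where
  "palintiple n b d k \<longleftrightarrow>
     1 < n \<and> n < b \<and> (\<forall>j\<le>k. d j < b) \<and> d k \<noteq> 0 \<and> d 0 \<noteq> 0 \<and>
     \<not> is_palindrome d k \<and>
     digval b d k = n * digval b (\<lambda>j. d (k - j)) k"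

text \<open>Carries of the base-b multiplication of (d 0, ..., d k)_b by n:
  c 0 = 0 and n d (k-j) + c j = d j + b c (j+1).\<close>
fun carry :: "nat \<Rightarrow> nat \<Rightarrow> (nat \<Rightarrow> nat) \<Rightarrow> nat \<Rightarrow> nat \<Rightarrow> nat" where
  "carry n b d k 0 = 0"
| "carry n b d k (Suc j) = (n * d (k - j) + carry n b d k j) div b"

definition shifted_symmetric :: "nat \<Rightarrow> nat \<Rightarrow> (nat \<Rightarrow> nat) \<Rightarrow> nat \<Rightarrow> bool" where
  "shifted_symmetric n b d k \<longleftrightarrow>
     (\<forall>j\<le>k. carry n b d k j = carry n b d k (k - j + 1))"

end

theory Submission
  imports Defs
begin

lemma carry_lt:
  assumes "\<forall>j\<le>k. d j < b" "0 < n" "n < b"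
  shows "carry n b d k j < n"
proof (induction j)
  case 0 then show ?case using assms by simp
next
  case (Suc j)
  have "d (k - j) \<le> b - 1" proof -
    have "d (k - j) < b" using assms(1) by simp
    then show ?thesis by linarith
  qed
  then have "n * d (k - j) \<le> n * (b - 1)" by simp
  moreover have "n * (b - 1) + n = n * b" using assms(3)
    by (simp add: diff_mult_distrib2)
  ultimately have "n * d (k - j) + carry n b d k j < n * b" using Suc by linarith
  then show ?case by (simp add: less_mult_imp_div_less mult.commute)
qed

lemma carry_expand:
  "n * (\<Sum>i<m. d (k - i) * b ^ i) =
   (\<Sum>i<m. ((n * d (k - i) + carry n b d k i) mod b) * b ^ i) + carry n b d k m * b ^ m"
proof (induction m)
  case 0 then show ?case by simp
next
  case (Suc m)
  have e: "n * d (k - m) + carry n b d k m = (n * d (k - m) + carry n b d k m) mod b + b * carry n b d k (Suc m)"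
    by simp
  have "n * (\<Sum>i<Suc m. d (k - i) * b ^ i) = n * (\<Sum>i<m. d (k - i) * b ^ i) + n * d (k - m) * b ^ m"
    by (simp add: algebra_simps)
  also have "\<dots> = (\<Sum>i<m. ((n * d (k - i) + carry n b d k i) mod b) * b ^ i) + (n * d (k - m) + carry n b d k m) * b ^ m"
    using Suc by (simp add: algebra_simps)
  also have "\<dots> = (\<Sum>i<m. ((n * d (k - i) + carry n b d k i) mod b) * b ^ i) + ((n * d (k - m) + carry n b d k m) mod b) * b^m + carry n b d k (Suc m) * b ^ Suc m"
  proof -
    define X where "X = n * d (k - m) + carry n b d k m"
    have "X * b ^ m = (X mod b + b * (X div b)) * b ^ m" by (simp only: mod_mult_div_eq)
    also have "\<dots> = (X mod b) * b ^ m + (X div b) * b ^ Suc m" by (simp only: distrib_right distrib_left power_Suc ac_simps)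
    finally have eq: "X * b ^ m = (X mod b) * b ^ m + (X div b) * b ^ Suc m" .
    have cs: "carry n b d k (Suc m) = X div b" unfolding X_def by simp
    show ?thesis unfolding X_def[symmetric] by (simp only: cs eq add.assoc)
  qed
  finally show ?case by simp
qed

lemma digits_unique:
  assumes "(\<Sum>i<m. x i * b ^ i) + X * b ^ m = (\<Sum>i<m. y i * b ^ i) + Y * b ^ m"
    "\<forall>i<m. x i < (b::nat) \<and> y i < b" "b > 0"
  shows "(\<forall>i<m. x i = y i) \<and> X = Y"
  using assms
proof (induction m arbitrary: X Y)
  case 0 then show ?case by simp
next
  case (Suc m)
  have h: "(\<Sum>i<m. x i * b ^ i) + (x m + b * X) * b ^ m = (\<Sum>i<m. y i * b ^ i) + (y m + b * Y) * b ^ m"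
    using Suc.prems(1) by (simp add: algebra_simps)
  from Suc.IH[OF h] Suc.prems(2,3) have a: "\<forall>i<m. x i = y i" and b: "x m + b * X = y m + b * Y" by auto
  have xm: "x m < b" "y m < b" using Suc.prems(2) by auto
  have "x m = y m" using b xm by (metis mod_mult_self2 mod_less)
  moreover have "X = Y" using b \<open>x m = y m\<close> Suc.prems(3) by simp
  ultimately show ?case using a less_Suc_eq by auto
qed

theorem theorem1:
  fixes b n k :: nat and d :: "nat \<Rightarrow> nat"
  assumes "b > 2" and "1 < n" and "n < b"
    and "palintiple n b d k"
  shows "shifted_symmetric n b d k \<longleftrightarrow> gcd (b - n) (n^2 - 1) \<ge> n + 1"
proof -
  define c where "c = carry n b d k"
  have dlt: "\<forall>j\<le>k. d j < b" and d0: "d 0 \<noteq> 0" and np: "\<not> is_palindrome d k"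
    and eq: "digval b d k = n * digval b (\<lambda>j. d (k - j)) k"
    using assms(4) unfolding palintiple_def by auto
  have k1: "k \<ge> 1" using np unfolding is_palindrome_def by (cases k) auto
  have clt: "\<And>j. c j < n" unfolding c_def using carry_lt dlt assms by auto
  have sumeq: "(\<Sum>i<Suc k. d i * b ^ i) + 0 * b ^ Suc k =
        (\<Sum>i<Suc k. ((n * d (k - i) + c i) mod b) * b ^ i) + c (Suc k) * b ^ Suc k"
    using eq carry_expand[where n=n and m="Suc k" and d=d and k=k and b=b] unfolding digval_def c_def
    by (simp add: lessThan_Suc_atMost)
  have lts: "\<forall>i<Suc k. d i < b \<and> (n * d (k - i) + c i) mod b < b"
    using dlt assms(3) by auto
  have bpos: "b > 0" using assms(3) by simp
  have "(\<forall>i<Suc k. d i = (n * d (k - i) + c i) mod b) \<and> 0 = c (Suc k)"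
    by (rule digits_unique[OF sumeq lts bpos])
  then have dig: "\<forall>i<Suc k. d i = (n * d (k - i) + c i) mod b" and cend0: "0 = c (Suc k)"
    by (rule conjunct1, rule conjunct2)
  have cend: "c (Suc k) = 0" using cend0 by (rule sym)
  have E: "n * d (k - j) + c j = d j + b * c (Suc j)" if "j \<le> k" for j
  proof -
    have X: "n * d (k - j) + c j = (n * d (k - j) + c j) mod b + b * ((n * d (k - j) + c j) div b)"
      by (simp only: mod_mult_div_eq)
    have dj: "d j = (n * d (k - j) + c j) mod b" using dig[rule_format, of j] that by linarith
    have cs: "c (Suc j) = (n * d (k - j) + c j) div b" unfolding c_def by simp
    show ?thesis by (subst X) (simp only: dj[symmetric] cs[symmetric])
  qed
  show ?thesis
  proof
    assume ss: "shifted_symmetric n b d k"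
    have c1: "c k = c 1" using ss k1 unfolding shifted_symmetric_def c_def by force
    have E0: "n * d k = d 0 + b * c 1" using E[of 0] c_def by simp
    have Ek: "n * d 0 + c k = d k" using E[of k] cend by simp
    define u where "u = n^2 - 1"
    have "int (n * (n * d 0 + c 1)) = int (d 0 + b * c 1)" using E0 Ek c1 by simp
    then have "int u * int (d 0) = (int b - int n) * int (c 1)"
      using assms(2) unfolding u_def by (simp add: of_nat_diff power2_eq_square algebra_simps)
    then have key: "u * d 0 = (b - n) * c 1" using assms(3)
      by (metis of_nat_diff of_nat_eq_iff of_nat_mult less_imp_le_nat)
    have upos: "u > 0" using assms(2) unfolding u_def
      by (metis One_nat_def less_1_mult power2_eq_square zero_less_diff)
    have "c 1 > 0" using key upos d0 by (metis mult_is_0 neq0_conv)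
    have "u dvd gcd (c 1 * u) (c 1 * (b - n))" using key
      by (metis dvd_triv_right gcd_greatest mult.commute dvd_def)
    then have "u dvd c 1 * gcd (b - n) u" by (simp add: gcd_mult_distrib_nat gcd.commute)
    then have "u \<le> c 1 * gcd (b - n) u" using \<open>c 1 > 0\<close> upos
      by (simp add: dvd_imp_le)
    also have "\<dots> \<le> (n - 1) * gcd (b - n) u" using clt[of 1] by (intro mult_le_mono1) linarith
    finally have f: "u \<le> (n - 1) * gcd (b - n) u" .
    have ueq: "u = (n - 1) * (n + 1)" unfolding u_def using assms(2)
      by (cases n) (simp_all add: power2_eq_square)
    have "(n - 1) * (n + 1) \<le> (n - 1) * gcd (b - n) u" using f ueq by simp
    then have "n + 1 \<le> gcd (b - n) u" using assms(2) mult_le_cancel1[of "n - 1" "n + 1" "gcd (b - n) u"] by linarith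
    then show "gcd (b - n) (n^2 - 1) \<ge> n + 1" unfolding u_def .
  next
    assume g: "gcd (b - n) (n^2 - 1) \<ge> n + 1"
    define G where "G = int (gcd (b - n) (n^2 - 1))"
    have bn: "int (b - n) = int b - int n" using assms(3) by simp
    have nn: "int (n^2 - 1) = int n ^ 2 - 1" using assms(2) by (simp add: of_nat_diff)
    have Gt1: "G dvd int (b - n)" unfolding G_def by (simp only: int_dvd_int_iff gcd_dvd1)
    have Gt2: "G dvd int (n^2 - 1)" unfolding G_def by (simp only: int_dvd_int_iff gcd_dvd2)
    have Gt: "G dvd int b - int n" "G dvd int n ^ 2 - 1" using Gt1 Gt2 bn nn by simp_all
    have step: "G dvd (int (c (Suc j)) - int (c (k - j))) - int n * (int (c j) - int (c (k - j + 1)))"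
      if "j \<le> k" for j
    proof -
      have e1: "int n * int (d (k - j)) + int (c j) = int (d j) + int b * int (c (Suc j))"
        using E[OF that] by (metis of_nat_add of_nat_mult)
      have e2: "int n * int (d j) + int (c (k - j)) = int (d (k - j)) + int b * int (c (k - j + 1))"
        using E[of "k - j"] that by (metis diff_diff_cancel diff_le_self of_nat_add of_nat_mult Suc_eq_plus1 Suc_diff_le)
      obtain t where t: "int b - int n = G * t" using Gt(1) by blast
      obtain s where s: "int n ^ 2 - 1 = G * s" using Gt(2) by blast
      have bb: "int b = int n + G * t" using t by simp
      have z1: "int n * int (d (k - j)) + int (c j) - (int (d j) + int b * int (c (Suc j))) = 0" using e1 by simp
      have z2: "int n * int (d j) + int (c (k - j)) - (int (d (k - j)) + int b * int (c (k - j + 1))) = 0" using e2 by simp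
      have "(int (c (Suc j)) - int (c (k - j))) - int n * (int (c j) - int (c (k - j + 1)))
            = (int n ^ 2 - 1) * (int (d (k - j)) - int (c (Suc j))) - (int b - int n) * (int (c (k - j + 1)) + int n * int (c (Suc j)))
              - int n * (int n * int (d (k - j)) + int (c j) - (int (d j) + int b * int (c (Suc j))))
              - (int n * int (d j) + int (c (k - j)) - (int (d (k - j)) + int b * int (c (k - j + 1))))"
        by (simp add: algebra_simps power2_eq_square)
      also have "\<dots> = (int n ^ 2 - 1) * (int (d (k - j)) - int (c (Suc j))) - (int b - int n) * (int (c (k - j + 1)) + int n * int (c (Suc j)))"
        by (simp only: z1 z2 diff_zero mult_zero_right)
      also have "\<dots> = G * (s * (int (d (k - j)) - int (c (Suc j))) - t * (int (c (k - j + 1)) + int n * int (c (Suc j))))"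
        using s t by (simp add: algebra_simps)
      finally show ?thesis by simp
    qed
    have ind: "G dvd int (c j) - int (c (k + 1 - j))" if "j \<le> k + 1" for j
      using that
    proof (induction j)
      case 0 then show ?case using cend by (simp add: c_def)
    next
      case (Suc j)
      then have jk: "j \<le> k" by simp
      have eqn: "int (c (Suc j)) - int (c (k + 1 - Suc j)) =
            ((int (c (Suc j)) - int (c (k - j))) - int n * (int (c j) - int (c (k - j + 1))))
            + int n * (int (c j) - int (c (k + 1 - j)))"
        using jk by (simp add: Suc_diff_le algebra_simps)
      have ih: "G dvd int (c j) - int (c (k + 1 - j))" using Suc by simp
      have "G dvd ((int (c (Suc j)) - int (c (k - j))) - int n * (int (c j) - int (c (k - j + 1))))
            + int n * (int (c j) - int (c (k + 1 - j)))"
        using step[OF jk] ih by (intro dvd_add dvd_mult)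
      then show ?case by (subst eqn)
    qed
    show "shifted_symmetric n b d k" unfolding shifted_symmetric_def
    proof (intro allI impI)
      fix j assume "j \<le> k"
      have dv: "G dvd int (c j) - int (c (k + 1 - j))" using ind \<open>j \<le> k\<close> by simp
      have "\<bar>int (c j) - int (c (k + 1 - j))\<bar> < G"
        using clt[of j] clt[of "k + 1 - j"] g unfolding G_def by linarith
      then have "int (c j) - int (c (k + 1 - j)) = 0"
      proof (rule contrapos_pp)
        assume ne: "int (c j) - int (c (k + 1 - j)) \<noteq> 0"
        have "\<bar>G\<bar> \<le> \<bar>int (c j) - int (c (k + 1 - j))\<bar>" by (rule dvd_imp_le_int[OF ne dv])
        moreover have "G \<ge> 0" unfolding G_def by simp
        ultimately show "\<not> \<bar>int (c j) - int (c (k + 1 - j))\<bar> < G" by linarith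
      qed
      then have "c j = c (k + 1 - j)" by simp
      then show "carry n b d k j = carry n b d k (k - j + 1)"
        using \<open>j \<le> k\<close> unfolding c_def by (simp add: Suc_diff_le)
    qed
  qed
qed

end
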